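(* Let $r$, $s$, $c$ and $a_n$ be any integers and let $n$ be a positive integer, and assume $V_r\neq0$. Then \[ \sum_{a_{n-1}=c}^{a_n}\sum_{a_{n-2}=c}^{a_{n-1}}\cdots\sum_{a_0=c}^{a_1}\frac{W_{ra_0+s}}{V_r^{a_0}} =(-1)^n\frac{W_{r(a_n+2n)+s}}{q^{rn}V_r^{a_n}}-\frac{1}{V_r^{c-1}}\sum_{j=0}^{n-1}(-1)^{n-j}\frac{W_{r(2n-2j+c-1)+s}}{q^{r(n-j)}}\binom{a_n+j-c}{j}. \]
   Context: Let $a,b,p,q$ be complex numbers with $p\neq0$, $q\neq0$. The Horadam sequence $W_j=W_j(a,b;p,q)$ is defined by $W_0=a$, $W_1=b$, $W_j=pW_{j-1}-qW_{j-2}$ for $j\ge2$, and extended to negative indices by $W_{-m}=(pW_{-m+1}-W_{-m+2})/q$, so the recurrence holds for all integers. $V_j=W_j(2,p;p,q)$ is the Lucas sequence of the second kind. For integers $c,m$ and a function $f$ on the integers, $\sum_{k=c}^m f(k)$ denotes the usual sum if $m\ge c$, equals $0$ if $m=c-1$, and equals $-\sum_{k=m+1}^{c-1}f(k)$ if $m\le c-2$. The nested sum $\sum_{a_{n-1}=c}^{a_n}\cdots\sum_{a_0=c}^{a_1}g(a_0)$ is the iterated sum with $n$ summation signs: innermost over $a_0$ from $c$ to $a_1$, then $a_1$ from $c$ to $a_2$, ..., outermost $a_{n-1}$ from $c$ to $a_n$. For an integer $j\ge0$ and any number $y$, $\binom{y}{j}=y(y-1)\cdots(y-j+1)/j!$.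 *)

theory Defs
  imports Complex_Main
begin

fun hor_nat :: "complex \<Rightarrow> complex \<Rightarrow> complex \<Rightarrow> complex \<Rightarrow> nat \<Rightarrow> complex" where
  "hor_nat a b p q 0 = a"
| "hor_nat a b p q (Suc 0) = b"
| "hor_nat a b p q (Suc (Suc n)) = p * hor_nat a b p q (Suc n) - q * hor_nat a b p q n"

text \<open>Horadam sequence at index -m, via W(-m) = (p W(-m+1) - W(-m+2)) / q.\<close>
fun hor_neg :: "complex \<Rightarrow> complex \<Rightarrow> complex \<Rightarrow> complex \<Rightarrow> nat \<Rightarrow> complex" where
  "hor_neg a b p q 0 = a"
| "hor_neg a b p q (Suc 0) = (p * a - b) / q"
| "hor_neg a b p q (Suc (Suc m)) = (p * hor_neg a b p q (Suc m) - hor_neg a b p q m) / q"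

definition horadam :: "complex \<Rightarrow> complex \<Rightarrow> complex \<Rightarrow> complex \<Rightarrow> int \<Rightarrow> complex" where
  "horadam a b p q j = (if 0 \<le> j then hor_nat a b p q (nat j) else hor_neg a b p q (nat (- j)))"

definition lucasV :: "complex \<Rightarrow> complex \<Rightarrow> int \<Rightarrow> complex" where
  "lucasV p q j = horadam 2 p p q j"

definition gsum :: "(int \<Rightarrow> complex) \<Rightarrow> int \<Rightarrow> int \<Rightarrow> complex" where
  "gsum f c m = (if c \<le> m then (\<Sum>k\<in>{c..m}. f k) else - (\<Sum>k\<in>{m+1..c-1}. f k))"

text \<open>n-fold nested sum: nested_sum n c g x = sum_{a_{n-1}=c}^{x} ... sum_{a_0=c}^{a_1} g a_0.\<close>
fun nested_sum :: "nat \<Rightarrow> int \<Rightarrow> (int \<Rightarrow> complex) \<Rightarrow> int \<Rightarrow> complex" where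
  "nested_sum 0 c g x = g x"
| "nested_sum (Suc n) c g x = gsum (nested_sum n c g) c x"

end

theory Submission
  imports Defs
begin

lemma hor_pos: "horadam a b p q (int m) = hor_nat a b p q m"
  by (simp add: horadam_def)

lemma hor_negi: "horadam a b p q (- int m) = hor_neg a b p q m"
  proof (cases m)
  case (Suc k)
  have "nat (int m) = m" by simp
  then show ?thesis using Suc by (simp add: horadam_def del: of_nat_Suc)
qed (simp add: horadam_def)

lemma hrec:
  assumes q: "q \<noteq> 0"
  shows "horadam a b p q (j+2) = p * horadam a b p q (j+1) - q * horadam a b p q j"
proof (cases "j \<ge> 0")
  case True
  then obtain n where j: "j = int n" by (metis nonneg_eq_int)
  have "horadam a b p q (j+2) = hor_nat a b p q (Suc (Suc n))"
    using hor_pos[of a b p q "Suc (Suc n)"] j by (simp add: add.commute)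
  moreover have "horadam a b p q (j+1) = hor_nat a b p q (Suc n)"
    using hor_pos[of a b p q "Suc n"] j by (simp add: add.commute)
  moreover have "horadam a b p q j = hor_nat a b p q n" using hor_pos j by simp
  ultimately show ?thesis by simp
next
  case False
  show ?thesis
  proof (cases "j = -1")
    case True
    have "horadam a b p q (j+2) = b" using True by (simp add: horadam_def)
    moreover have "horadam a b p q (j+1) = a" using True by (simp add: horadam_def)
    moreover have "horadam a b p q j = (p*a-b)/q"
      using True hor_negi[of a b p q 1] by simp
    ultimately show ?thesis using q by (simp add: field_simps)
  next
    case F2: False
    define m where "m = nat (- j) - 2"
    have j: "j = - int (Suc (Suc m))" using False F2 unfolding m_def by simp
    have e1: "horadam a b p q (j+2) = hor_neg a b p q m"
      using hor_negi[of a b p q m] j by simp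
    have e2: "horadam a b p q (j+1) = hor_neg a b p q (Suc m)"
      using hor_negi[of a b p q "Suc m"] j by simp
    have e3: "horadam a b p q j = hor_neg a b p q (Suc (Suc m))"
      using hor_negi[of a b p q "Suc (Suc m)"] j by simp
    show ?thesis unfolding e1 e2 e3 using q by (simp add: field_simps)
  qed
qed

lemma rec_unique:
  fixes h :: "int \<Rightarrow> complex"
  assumes q: "q \<noteq> 0" and r: "\<And>j. h (j+2) = p * h (j+1) - q * h j"
    and h0: "h 0 = 0" and h1: "h 1 = 0"
  shows "h j = 0"
proof -
  have f: "h (int n) = 0 \<and> h (int n + 1) = 0" for n
  proof (induction n)
    case 0 then show ?case using h0 h1 by simp
  next
    case (Suc n)
    have "h (int n + 2) = p * h (int n + 1) - q * h (int n)" by (rule r)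
    then have "h (int n + 2) = 0" using Suc by simp
    then have "h (int n + 1 + 1) = 0" by (simp add: add.assoc)
    moreover have e: "int (Suc n) = int n + 1" by simp
    ultimately show ?case unfolding e using Suc by blast
  qed
  have b: "h (- int n) = 0 \<and> h (1 - int n) = 0" for n
  proof (induction n)
    case 0 then show ?case using h0 h1 by simp
  next
    case (Suc n)
    have e0: "- int n - 1 + 2 = 1 - int n" "- int n - 1 + 1 = - int n" by simp_all
    have "h (- int n - 1 + 2) = p * h (- int n - 1 + 1) - q * h (- int n - 1)" by (rule r)
    then have "q * h (- int n - 1) = 0" unfolding e0 using Suc by simp
    then have "h (- int n - 1) = 0" using q by simp
    moreover have e: "- int (Suc n) = - int n - 1" "1 - int (Suc n) = - int n" by simp_all
    ultimately show ?case unfolding e using Suc by blast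
  qed
  show ?thesis
  proof (cases "j \<ge> 0")
    case True
    then have "j = int (nat j)" by simp
    then show ?thesis using f[of "nat j"] by metis
  next
    case False
    then have "j = - int (nat (-j))" by simp
    then show ?thesis using b[of "nat (-j)"] by metis
  qed
qed

lemma VW:
  assumes q: "q \<noteq> 0"
  shows "lucasV p q r * horadam a b p q m
     = horadam a b p q (m + r) + q powi r * horadam a b p q (m - r)"
proof -
  define h where "h r = lucasV p q r * horadam a b p q m
     - (horadam a b p q (m + r) + q powi r * horadam a b p q (m - r))" for r
  have "h r = 0"
  proof (rule rec_unique[OF q])
    fix j
    have V: "lucasV p q (j+2) = p * lucasV p q (j+1) - q * lucasV p q j"
      unfolding lucasV_def by (rule hrec[OF q])
    have W1: "horadam a b p q (m + (j+2)) = p * horadam a b p q (m+(j+1)) - q * horadam a b p q (m+j)"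
      using hrec[OF q, of a b p "m+j"] by (simp add: algebra_simps)
    have W2: "horadam a b p q (m - j) = p * horadam a b p q (m-(j+1)) - q * horadam a b p q (m-(j+2))"
      using hrec[OF q, of a b p "m-j-2"] by (simp add: algebra_simps)
    have P1: "q powi (j+1) = q powi j * q" using q by (simp add: power_int_add)
    have P2: "q powi (j+2) = q powi j * q * q" using q by (simp add: power_int_add power2_eq_square)
    show "h (j+2) = p * h (j+1) - q * h j"
      unfolding h_def V W1 P1 P2 W2 by (simp add: algebra_simps)
  next
    show "h 0 = 0" unfolding h_def lucasV_def by (simp add: horadam_def)
  next
    have "lucasV p q 1 = p" unfolding lucasV_def by (simp add: horadam_def)
    moreover have "horadam a b p q (m+1) = p * horadam a b p q m - q * horadam a b p q (m - 1)"
      using hrec[OF q, of a b p "m-1"] by (simp add: algebra_simps)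
    ultimately show "h 1 = 0" unfolding h_def by simp
  qed
  then show ?thesis unfolding h_def by simp
qed


lemma tele_int:
  fixes G :: "int \<Rightarrow> complex"
  assumes "m \<le> n"
  shows "(\<Sum>k\<in>{m+1..n}. G k - G (k-1)) = G n - G m"
  using assms
proof (induction n rule: int_ge_induct)
  case base then show ?case by simp
next
  case (step n)
  have "{m+1..n+1} = insert (n+1) {m+1..n}" using step by auto
  then have "(\<Sum>k\<in>{m+1..n+1}. G k - G (k-1)) = (G (n+1) - G n) + (\<Sum>k\<in>{m+1..n}. G k - G (k-1))"
    by simp
  then show ?case using step by simp
qed

lemma gsum_tele:
  assumes "\<And>k. g k = G k - G (k-1)"
  shows "gsum g c x = G x - G (c-1)"
proof (cases "c \<le> x")
  case True
  have "{c..x} = {(c-1)+1..x}" by simp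
  then have "gsum g c x = (\<Sum>k\<in>{(c-1)+1..x}. G k - G (k-1))"
    using True assms by (simp add: gsum_def)
  also have "\<dots> = G x - G (c-1)" using True by (intro tele_int) simp
  finally show ?thesis .
next
  case False
  have "gsum g c x = - (\<Sum>k\<in>{x+1..c-1}. G k - G (k-1))"
    using False assms by (simp add: gsum_def)
  also have "\<dots> = - (G (c-1) - G x)" using False by (subst tele_int) simp_all
  finally show ?thesis by simp
qed

definition Fn :: "complex \<Rightarrow> complex \<Rightarrow> complex \<Rightarrow> complex \<Rightarrow> int \<Rightarrow> int \<Rightarrow> nat \<Rightarrow> int \<Rightarrow> complex" where
  "Fn a b p q r s n x = horadam a b p q (r * (x + 2 * int n) + s) / (q powi (r * int n) * lucasV p q r powi x)"

definition Cf :: "complex \<Rightarrow> complex \<Rightarrow> complex \<Rightarrow> complex \<Rightarrow> int \<Rightarrow> int \<Rightarrow> int \<Rightarrow> nat \<Rightarrow> nat \<Rightarrow> complex" where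
  "Cf a b p q r s c n j = (-1) ^ (n - j) * horadam a b p q (r * (2 * int n - 2 * int j + c - 1) + s)
                 / (q powi (r * (int n - int j)))"

definition Sn :: "complex \<Rightarrow> complex \<Rightarrow> complex \<Rightarrow> complex \<Rightarrow> int \<Rightarrow> int \<Rightarrow> int \<Rightarrow> nat \<Rightarrow> int \<Rightarrow> complex" where
  "Sn a b p q r s c n x = (\<Sum>j<n. Cf a b p q r s c n j * (of_int (x + int j - c) gchoose j))"

definition Rn :: "complex \<Rightarrow> complex \<Rightarrow> complex \<Rightarrow> complex \<Rightarrow> int \<Rightarrow> int \<Rightarrow> int \<Rightarrow> nat \<Rightarrow> int \<Rightarrow> complex" where
  "Rn a b p q r s c n x = (-1) ^ n * Fn a b p q r s n x - 1 / (lucasV p q r powi (c - 1)) * Sn a b p q r s c n x"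

lemma Fstep:
  assumes q: "q \<noteq> 0" and V: "lucasV p q r \<noteq> 0"
  shows "Fn a b p q r s n k = Fn a b p q r s (Suc n) (k-1) - Fn a b p q r s (Suc n) k"
proof -
  define m where "m = r * (k + 2 * int n + 1) + s"
  have i1: "r * ((k-1) + 2 * int (Suc n)) + s = m" unfolding m_def by (simp add: algebra_simps)
  have i2: "r * (k + 2 * int (Suc n)) + s = m + r" unfolding m_def by (simp add: algebra_simps)
  have i3: "r * (k + 2 * int n) + s = m - r" unfolding m_def by (simp add: algebra_simps)
  have vw: "horadam a b p q (m + r) = lucasV p q r * horadam a b p q m - q powi r * horadam a b p q (m - r)"
    using VW[OF q, of p r a b m] by simp
  have "r * int (Suc n) = r * int n + r" by (simp add: algebra_simps)
  then have p1: "q powi (r * int (Suc n)) = q powi (r * int n) * q powi r"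
    using q by (simp add: power_int_add)
  have p2: "lucasV p q r powi (k-1) = lucasV p q r powi k / lucasV p q r"
    using V by (simp add: power_int_diff)
  have nz: "q powi (r * int n) \<noteq> 0" "q powi r \<noteq> 0" "lucasV p q r powi k \<noteq> 0"
    using q V by auto
  have alg: "Z / (A * B) = X / (A * Q * (B / V0)) - (V0 * X - Q * Z) / (A * Q * B)"
    if "A \<noteq> 0" "Q \<noteq> 0" "B \<noteq> 0" "V0 \<noteq> 0" for A Q B V0 X Z :: complex
    using that by (simp add: field_simps)
  show ?thesis unfolding Fn_def i1 i2 i3 p1 p2 vw by (rule alg[OF nz V])
qed

lemma Cstep: "Cf a b p q r s c (Suc n) (Suc j) = Cf a b p q r s c n j"
proof -
  have "r * (2 * int (Suc n) - 2 * int (Suc j) + c - 1) + s = r * (2 * int n - 2 * int j + c - 1) + s"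
    by simp
  moreover have "r * (int (Suc n) - int (Suc j)) = r * (int n - int j)" by simp
  ultimately show ?thesis unfolding Cf_def by simp
qed

lemma Sstep: "Sn a b p q r s c n k = Sn a b p q r s c (Suc n) k - Sn a b p q r s c (Suc n) (k-1)"
proof -
  have g: "(of_int (k + int (Suc j) - c) gchoose (Suc j)) - (of_int (k - 1 + int (Suc j) - c) gchoose (Suc j))
      = (of_int (k + int j - c) gchoose j :: complex)" for j
  proof -
    have e1: "(of_int (k + int (Suc j) - c) :: complex) = of_int (k + int j - c) + 1" by simp
    have e2: "(of_int (k - 1 + int (Suc j) - c) :: complex) = of_int (k + int j - c)" by simp
    show ?thesis unfolding e1 e2 gbinomial_Suc_Suc by simp
  qed
  have "Sn a b p q r s c (Suc n) k - Sn a b p q r s c (Suc n) (k-1)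
     = (\<Sum>j<n. Cf a b p q r s c (Suc n) (Suc j) * ((of_int (k + int (Suc j) - c) gchoose (Suc j))
          - (of_int (k - 1 + int (Suc j) - c) gchoose (Suc j))))"
    unfolding Sn_def sum.lessThan_Suc_shift by (simp add: sum_subtractf algebra_simps)
  also have "\<dots> = Sn a b p q r s c n k" unfolding g Cstep Sn_def by simp
  finally show ?thesis by simp
qed

lemma Rstep:
  assumes q: "q \<noteq> 0" and V: "lucasV p q r \<noteq> 0"
  shows "Rn a b p q r s c n k = Rn a b p q r s c (Suc n) k - Rn a b p q r s c (Suc n) (k-1)"
proof -
  have alg: "(-1) ^ n * (F0 - F1) - D * (S1 - S0) = ((-1) ^ Suc n * F1 - D * S1) - ((-1) ^ Suc n * F0 - D * S0)"
    for F0 F1 D S0 S1 :: complex by (simp add: algebra_simps)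
  show ?thesis
    unfolding Rn_def Fstep[OF q V, of a b s n k] Sstep[of a b p q r s c n k] alg ..
qed

lemma Rzero:
  assumes q: "q \<noteq> 0" and V: "lucasV p q r \<noteq> 0"
  shows "Rn a b p q r s c (Suc n) (c-1) = 0"
proof -
  have z: "(of_int (c - 1 + int (Suc j) - c) gchoose (Suc j) :: complex) = 0" for j
  proof -
    have "(of_int (c - 1 + int (Suc j) - c) :: complex) = of_nat j" by simp
    then show ?thesis by (simp flip: binomial_gbinomial)
  qed
  have S: "Sn a b p q r s c (Suc n) (c-1) = Cf a b p q r s c (Suc n) 0"
    unfolding Sn_def sum.lessThan_Suc_shift z by simp
  have C: "Cf a b p q r s c (Suc n) 0 = (-1) ^ Suc n * horadam a b p q (r * (c - 1 + 2 * int (Suc n)) + s)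
      / q powi (r * int (Suc n))"
  proof -
    have e: "r * (2 * int (Suc n) - 2 * int 0 + c - 1) + s = r * (c - 1 + 2 * int (Suc n)) + s"
      by simp
    show ?thesis unfolding Cf_def e by simp
  qed
  have alg: "E * (w / (A * B)) - 1 / B * (E * w / A) = 0" if "B \<noteq> 0"
    for E w A B :: complex using that by (simp add: field_simps)
  have "lucasV p q r powi (c - 1) \<noteq> 0" using V by simp
  then show ?thesis unfolding Rn_def Fn_def S C by (rule alg)
qed

lemma main:
  assumes q: "q \<noteq> 0" and V: "lucasV p q r \<noteq> 0"
  shows "nested_sum n c (\<lambda>x. horadam a b p q (r * x + s) / (lucasV p q r powi x)) x = Rn a b p q r s c n x"
proof (induction n arbitrary: x)
  case 0 then show ?case by (simp add: Rn_def Fn_def Sn_def)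
next
  case (Suc n)
  have "nested_sum (Suc n) c (\<lambda>x. horadam a b p q (r * x + s) / (lucasV p q r powi x)) x
     = gsum (Rn a b p q r s c n) c x"
  proof -
    have "nested_sum n c (\<lambda>x. horadam a b p q (r * x + s) / (lucasV p q r powi x)) = Rn a b p q r s c n"
      by (rule ext) (rule Suc.IH)
    then show ?thesis by simp
  qed
  also have "\<dots> = Rn a b p q r s c (Suc n) x - Rn a b p q r s c (Suc n) (c-1)"
    by (rule gsum_tele) (rule Rstep[OF q V])
  finally show ?case using Rzero[OF q V] by simp
qed

theorem theorem3:
  fixes a b p q :: complex and r s c an :: int and n :: nat
  assumes "p \<noteq> 0" and "q \<noteq> 0" and "0 < n" and "lucasV p q r \<noteq> 0"
  shows "nested_sum n c (\<lambda>x. horadam a b p q (r * x + s) / (lucasV p q r powi x)) an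
    = (-1) ^ n * horadam a b p q (r * (an + 2 * int n) + s)
        / (q powi (r * int n) * lucasV p q r powi an)
      - 1 / (lucasV p q r powi (c - 1)) *
        (\<Sum>j<n. (-1) ^ (n - j) * horadam a b p q (r * (2 * int n - 2 * int j + c - 1) + s)
                 / (q powi (r * (int n - int j))) * (of_int (an + int j - c) gchoose j))"
  unfolding main[OF assms(2) assms(4)] Rn_def Fn_def Sn_def Cf_def by simp

end
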